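(* (i) If $\alpha<0$, there is a $\mathrm{TN}_3$ function $\Lambda:\mathbb{R}\to(0,\infty)$ such that $\Lambda^\alpha$ is not $\mathrm{TN}_3$ (e.g. $\Lambda(x)=e^{-x^2}$). (ii) Let $\alpha\ge0$, with the convention $0^0:=0$. Then $\Lambda^\alpha$ is $\mathrm{TN}_3$ for every $\mathrm{TN}_3$ function $\Lambda:\mathbb{R}\to\mathbb{R}$ if and only if $\alpha\ge1$.
   Context: A function $\Lambda:\mathbb{R}\to\mathbb{R}$ is $\mathrm{TN}_p$ if for all $1 \le r \le p$ and all real $x_1<\dots<x_r$, $y_1<\dots<y_r$, $\det(\Lambda(x_j-y_k))_{j,k=1}^r \ge 0$. $\Lambda^\alpha$ means $x\mapsto\Lambda(x)^\alpha$ (note $\mathrm{TN}_3$ functions are non-negative). *)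

theory Defs
  imports "HOL-Analysis.Analysis"
begin

definition detn :: "nat \<Rightarrow> (nat \<Rightarrow> nat \<Rightarrow> real) \<Rightarrow> real" where
  "detn r A = (\<Sum>\<sigma> | \<sigma> permutes {..<r}. of_int (sign \<sigma>) * (\<Prod>j<r. A j (\<sigma> j)))"

definition TN :: "nat \<Rightarrow> (real \<Rightarrow> real) \<Rightarrow> bool" where
  "TN p L \<longleftrightarrow> (\<forall>r. 1 \<le> r \<and> r \<le> p \<longrightarrow>
     (\<forall>x y :: nat \<Rightarrow> real. strict_mono_on {..<r} x \<longrightarrow> strict_mono_on {..<r} y \<longrightarrow>
        detn r (\<lambda>j k. L (x j - y k)) \<ge> 0))"

end

theory Submission
  imports Defs
begin

lemma detn1: "detn 1 A = A 0 0"
proof -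
  have e: "{..<1::nat} = insert 0 {}" by auto
  show ?thesis unfolding detn_def e
    by (simp add: sum_over_permutations_insert sign_compose permutation_swap_id sign_swap_id algebra_simps)
qed

lemma detn2: "detn 2 A = A 0 0 * A 1 1 - A 0 1 * A 1 0"
proof -
  have e: "{..<2::nat} = insert 0 (insert 1 {})" by auto
  show ?thesis unfolding detn_def e
    by (simp add: sum_over_permutations_insert sign_compose permutation_swap_id sign_swap_id algebra_simps)
qed

lemma detn1': "detn (Suc 0) A = A 0 0" using detn1 by simp

definition det3 :: "real \<Rightarrow> real \<Rightarrow> real \<Rightarrow> real \<Rightarrow> real \<Rightarrow> real \<Rightarrow> real \<Rightarrow> real \<Rightarrow> real \<Rightarrow> real" where
  "det3 a b c d e f g h i = a*(e*i - f*h) - b*(d*i - f*g) + c*(d*h - e*g)"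

lemma detn3: "detn 3 A = det3 (A 0 0) (A 0 1) (A 0 2) (A 1 0) (A 1 1) (A 1 2) (A 2 0) (A 2 1) (A 2 2)"
proof -
  have e: "{..<3::nat} = insert 0 (insert 1 (insert 2 {}))" by auto
  show ?thesis unfolding detn_def e det3_def
    by (simp add: sum_over_permutations_insert sign_compose permutation_swap_id sign_swap_id algebra_simps)
qed

lemma smo2: "strict_mono_on {..<2::nat} (x::nat\<Rightarrow>real) \<longleftrightarrow> x 0 < x 1"
  by (auto simp: strict_mono_on_def less_Suc_eq numeral_2_eq_2)

lemma smo3: "strict_mono_on {..<3::nat} (x::nat\<Rightarrow>real) \<longleftrightarrow> x 0 < x 1 \<and> x 1 < x 2"
  apply (auto simp: strict_mono_on_def less_Suc_eq numeral_3_eq_3 numeral_2_eq_2)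
  done

lemma smo1: "strict_mono_on {..<1::nat} (x::nat\<Rightarrow>real)"
  by (auto simp: strict_mono_on_def)

lemma smo1': "strict_mono_on {..<Suc 0} (x::nat\<Rightarrow>real)"
  by (auto simp: strict_mono_on_def)

definition K3 :: "(real \<Rightarrow> real) \<Rightarrow> real \<Rightarrow> real \<Rightarrow> real \<Rightarrow> real \<Rightarrow> real \<Rightarrow> real \<Rightarrow> real" where
  "K3 L x1 x2 x3 y1 y2 y3 = det3 (L (x1-y1)) (L (x1-y2)) (L (x1-y3)) (L (x2-y1)) (L (x2-y2)) (L (x2-y3))
      (L (x3-y1)) (L (x3-y2)) (L (x3-y3))"

lemma TN3I:
  assumes nn: "\<And>z. 0 \<le> L z"
    and t2: "\<And>x1 x2 y1 y2. x1 < x2 \<Longrightarrow> y1 < y2 \<Longrightarrow> L (x1-y2) * L (x2-y1) \<le> L (x1-y1) * L (x2-y2)"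
    and t3: "\<And>x1 x2 x3 y1 y2 y3. x1 < x2 \<Longrightarrow> x2 < x3 \<Longrightarrow> y1 < y2 \<Longrightarrow> y2 < y3 \<Longrightarrow> 0 \<le> K3 L x1 x2 x3 y1 y2 y3"
  shows "TN 3 L"
  unfolding TN_def
proof (intro allI impI)
  fix r :: nat and x y :: "nat \<Rightarrow> real"
  assume r: "1 \<le> r \<and> r \<le> 3" and sx: "strict_mono_on {..<r} x" and sy: "strict_mono_on {..<r} y"
  then consider "r = 1" | "r = 2" | "r = 3" by linarith
  then show "0 \<le> detn r (\<lambda>j k. L (x j - y k))"
  proof cases
    case 1 then show ?thesis by (simp add: detn1 detn1' nn)
  next
    case 2 then show ?thesis using sx sy t2[of "x 0" "x 1" "y 0" "y 1"] by (simp add: detn2 smo2)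
  next
    case 3 then show ?thesis using sx sy t3[of "x 0" "x 1" "x 2" "y 0" "y 1" "y 2"] by (simp add: detn3 smo3 K3_def)
  qed
qed

lemma TN3D1: "TN 3 L \<Longrightarrow> 0 \<le> L z"
  unfolding TN_def
  apply (drule spec[of _ 1])
  apply (drule mp, simp)
  apply (drule spec[of _ "\<lambda>_. z"], drule spec[of _ "\<lambda>_. 0"])
  by (simp add: detn1' smo1')

lemma TN3D2: "TN 3 L \<Longrightarrow> x1 < x2 \<Longrightarrow> y1 < y2 \<Longrightarrow> L (x1-y2) * L (x2-y1) \<le> L (x1-y1) * L (x2-y2)"
  unfolding TN_def
  apply (drule spec[of _ 2])
  apply (drule mp, simp)
  apply (drule spec[of _ "\<lambda>i. if i = 0 then x1 else x2"], drule spec[of _ "\<lambda>i. if i = 0 then y1 else y2"])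
  by (simp add: detn2 smo2)

lemma TN3D3: "TN 3 L \<Longrightarrow> x1 < x2 \<Longrightarrow> x2 < x3 \<Longrightarrow> y1 < y2 \<Longrightarrow> y2 < y3 \<Longrightarrow> 0 \<le> K3 L x1 x2 x3 y1 y2 y3"
  unfolding TN_def
  apply (drule spec[of _ 3])
  apply (drule mp, simp)
  apply (drule spec[of _ "\<lambda>i. if i = 0 then x1 else if i = 1 then x2 else x3"], drule spec[of _ "\<lambda>i. if i = 0 then y1 else if i = 1 then y2 else y3"])
  by (simp add: detn3 smo3 K3_def)

lemma desnanot: "e * det3 a b c d e f g h i = (a*e - b*d)*(e*i - f*h) - (b*f - c*e)*(d*h - e*g)"
  unfolding det3_def by algebra

lemma crit:
  assumes nn: "0\<le>a" "0\<le>b" "0\<le>c" "0\<le>d" "0\<le>e" "0\<le>f" "0\<le>g" "0\<le>h" "0\<le>i"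
    and m1: "b*d \<le> a*e" and m2: "f*h \<le> e*i"
    and m3: "e > 0 \<Longrightarrow> (b*f - c*e)*(d*h - e*g) \<le> (a*e - b*d)*(e*i - f*h)"
  shows "0 \<le> det3 a b c d e f g h i"
proof (cases "e = 0")
  case True
  have "0 \<le> b*d" "0 \<le> f*h" using nn by simp_all
  then have bd: "b*d = 0" and fh: "f*h = 0" using m1 m2 True by auto
  have "det3 a b c d e f g h i = b*f*g + c*d*h - a*(f*h) - (b*d)*i"
    unfolding det3_def using True by algebra
  also have "\<dots> = b*f*g + c*d*h" proof -
    have "a*(f*h) = 0" "(b*d)*i = 0" using bd fh by simp_all
    then show ?thesis by linarith
  qed
  also have "\<dots> \<ge> 0" using nn by simp
  finally show ?thesis .
next
  case False
  then have e: "e > 0" using nn by simp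
  have "0 \<le> e * det3 a b c d e f g h i" unfolding desnanot using m3[OF e] by simp
  then show ?thesis using e by (simp add: zero_le_mult_iff)
qed

lemma crit_conv:
  assumes "e > 0" "0 \<le> det3 a b c d e f g h i"
  shows "(b*f - c*e)*(d*h - e*g) \<le> (a*e - b*d)*(e*i - f*h)"
proof -
  have "0 \<le> e * det3 a b c d e f g h i" using assms by simp
  then show ?thesis unfolding desnanot by simp
qed

lemma tangent:
  fixes u v t :: real
  assumes u: "0 \<le> u" and v: "0 \<le> v" and t: "1 \<le> t"
  shows "t * v powr (t-1) * (u - v) \<le> u powr t - v powr t"
proof (cases "v = 0")
  case True
  then show ?thesis using u by simp
next
  case False
  then have v': "v > 0" using v by simp
  show ?thesis
  proof (cases "u = 0")
    case True
    have "v powr t = v * v powr (t-1)" using v' by (simp add: powr_mult_base)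
    then have "t * v powr (t-1) * (u - v) = -(t * v powr t)" using True by simp
    also have "\<dots> \<le> -(v powr t)" using t by (simp add: mult_le_cancel_right1)
    finally show ?thesis using True t by simp
  next
    case False
    then have u': "u > 0" using u by simp
    have "t * v powr (t-1) * (u - v) \<le> u powr t - v powr t"
      using t u' v'
      by (intro convex_on_imp_above_tangent[where A = "{0<..}", OF powr_convex[OF t]])
         (auto intro!: derivative_eq_intros simp: interior_open)
    then show ?thesis .
  qed
qed

lemma key:
  fixes x y P Q R S a b t :: real
  assumes P: "0 \<le> P" "P \<le> x" and Q: "0 \<le> Q" "Q \<le> y"
    and a: "0 \<le> a" "a \<le> R" and b: "0 \<le> b" "b \<le> S"
    and PQ: "P*Q = R*S" and m: "(R-a)*(S-b) \<le> (x-P)*(y-Q)" and t: "1 \<le> t"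
  shows "(R powr t - a powr t)*(S powr t - b powr t) \<le> (x powr t - P powr t)*(y powr t - Q powr t)"
proof -
  have R0: "0 \<le> R" "0 \<le> S" using a b by linarith+
  have h1: "t * P powr (t-1) * (x - P) \<le> x powr t - P powr t" using tangent[of x P t] P t by simp
  have h2: "t * Q powr (t-1) * (y - Q) \<le> y powr t - Q powr t" using tangent[of y Q t] Q t by simp
  have h3: "R powr t - a powr t \<le> t * R powr (t-1) * (R - a)" using tangent[of a R t] a t by (simp add: algebra_simps)
  have h4: "S powr t - b powr t \<le> t * S powr (t-1) * (S - b)" using tangent[of b S t] b t R0 by (simp add: algebra_simps)
  have g3: "0 \<le> R powr t - a powr t" using a t by (simp add: powr_mono2)
  have g4: "0 \<le> S powr t - b powr t" using b t by (simp add: powr_mono2)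
  have n1: "0 \<le> t * P powr (t-1) * (x - P)" using P t by simp
  have n2: "0 \<le> t * Q powr (t-1) * (y - Q)" using Q t by simp
  have "(R powr t - a powr t)*(S powr t - b powr t) \<le> (t * R powr (t-1) * (R - a)) * (t * S powr (t-1) * (S - b))"
    using h3 h4 g3 g4 by (intro mult_mono) auto
  also have "\<dots> = t*t * (R*S) powr (t-1) * ((R-a)*(S-b))" by (simp add: powr_mult algebra_simps)
  also have "\<dots> \<le> t*t * (P*Q) powr (t-1) * ((x-P)*(y-Q))"
    unfolding PQ using m by (intro mult_left_mono) auto
  also have "\<dots> = (t * P powr (t-1) * (x - P)) * (t * Q powr (t-1) * (y - Q))" by (simp add: powr_mult algebra_simps)
  also have "\<dots> \<le> (x powr t - P powr t)*(y powr t - Q powr t)"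
    using h1 h2 n1 n2 by (intro mult_mono) auto
  finally show ?thesis .
qed

lemma power3:
  fixes t :: real
  assumes nn: "0\<le>a" "0\<le>b" "0\<le>c" "0\<le>d" "0\<le>e" "0\<le>f" "0\<le>g" "0\<le>h" "0\<le>i"
    and m1: "b*d \<le> a*e" and m2: "f*h \<le> e*i" and m3: "c*e \<le> b*f" and m4: "e*g \<le> d*h"
    and dt: "0 \<le> det3 a b c d e f g h i" and t: "1 \<le> t"
  shows "0 \<le> det3 (a powr t) (b powr t) (c powr t) (d powr t) (e powr t) (f powr t) (g powr t) (h powr t) (i powr t)"
proof (rule crit)
  show "b powr t * d powr t \<le> a powr t * e powr t"
    using m1 nn t by (simp add: powr_mult[symmetric] powr_mono2)
  show "f powr t * h powr t \<le> e powr t * i powr t"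
    using m2 nn t by (simp add: powr_mult[symmetric] powr_mono2)
  assume "e powr t > 0"
  then have e: "e > 0" using nn by (cases "e = 0") auto
  have c: "(b*f - c*e)*(d*h - e*g) \<le> (a*e - b*d)*(e*i - f*h)" using crit_conv[OF e dt] .
  have "((b*f) powr t - (c*e) powr t)*((d*h) powr t - (e*g) powr t) \<le> ((a*e) powr t - (b*d) powr t)*((e*i) powr t - (f*h) powr t)"
    by (rule key) (use nn m1 m2 m3 m4 c t in \<open>auto simp: algebra_simps\<close>)
  then show "(b powr t * f powr t - c powr t * e powr t) * (d powr t * h powr t - e powr t * g powr t)
    \<le> (a powr t * e powr t - b powr t * d powr t) * (e powr t * i powr t - f powr t * h powr t)"
    by (simp add: powr_mult)
qed (use nn in auto)

lemma TN3_power: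
  assumes L: "TN 3 L" and t: "1 \<le> t"
  shows "TN 3 (\<lambda>x. L x powr t)"
proof (rule TN3I)
  show "0 \<le> L z powr t" for z by simp
  show "L (x1-y2) powr t * L (x2-y1) powr t \<le> L (x1-y1) powr t * L (x2-y2) powr t"
    if "x1 < x2" "y1 < y2" for x1 x2 y1 y2
    using TN3D2[OF L that] TN3D1[OF L] t by (simp add: powr_mult[symmetric] powr_mono2)
  show "0 \<le> K3 (\<lambda>x. L x powr t) x1 x2 x3 y1 y2 y3"
    if "x1 < x2" "x2 < x3" "y1 < y2" "y2 < y3" for x1 x2 x3 y1 y2 y3
    unfolding K3_def
    apply (rule power3)
    using TN3D1[OF L] TN3D2[OF L] TN3D3[OF L that, unfolded K3_def] that t
    by (auto simp: algebra_simps)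
qed

definition EL :: "real \<Rightarrow> real" where "EL z = exp (- max 0 z)"

lemma EL_mult: "EL u * EL v = exp (- (max 0 u + max 0 v))"
  unfolding EL_def by (simp add: exp_add[symmetric])

lemma EL_TN2: "x1 < x2 \<Longrightarrow> y1 < y2 \<Longrightarrow> EL (x1-y2) * EL (x2-y1) \<le> EL (x1-y1) * EL (x2-y2)"
  unfolding EL_mult by (simp add: max_def)

lemma EL_TN3: "TN 3 EL"
proof (rule TN3I)
  show "0 \<le> EL z" for z by (simp add: EL_def)
  show "EL (x1-y2) * EL (x2-y1) \<le> EL (x1-y1) * EL (x2-y2)" if "x1 < x2" "y1 < y2" for x1 x2 y1 y2
    using EL_TN2 that .
  fix x1 x2 x3 y1 y2 y3 :: real
  assume xy: "x1 < x2" "x2 < x3" "y1 < y2" "y2 < y3"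
  let ?a = "EL (x1-y1)" and ?b = "EL (x1-y2)" and ?c = "EL (x1-y3)"
  let ?d = "EL (x2-y1)" and ?e = "EL (x2-y2)" and ?f = "EL (x2-y3)"
  let ?g = "EL (x3-y1)" and ?h = "EL (x3-y2)" and ?i = "EL (x3-y3)"
  have M11: "?b*?d \<le> ?a*?e" using EL_TN2 xy by simp
  have M33: "?f*?h \<le> ?e*?i" using EL_TN2[of x2 x3 y2 y3] xy by simp
  have M13: "?c*?e \<le> ?b*?f" using EL_TN2[of x1 x2 y2 y3] xy by simp
  have M31: "?e*?g \<le> ?d*?h" using EL_TN2[of x2 x3 y1 y2] xy by (simp add: mult.commute)
  have disj: "?b*?f \<le> ?c*?e \<or> ?d*?h \<le> ?e*?g"
    unfolding EL_mult using xy by (simp add: max_def)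
  have "(?b*?f - ?c*?e)*(?d*?h - ?e*?g) \<le> 0"
    using disj M13 M31 by (auto simp: mult_le_0_iff)
  also have "0 \<le> (?a*?e - ?b*?d)*(?e*?i - ?f*?h)" using M11 M33 by simp
  finally have m3: "(?b*?f - ?c*?e)*(?d*?h - ?e*?g) \<le> (?a*?e - ?b*?d)*(?e*?i - ?f*?h)" .
  show "0 \<le> K3 EL x1 x2 x3 y1 y2 y3"
    unfolding K3_def by (rule crit) (use M11 M33 m3 in \<open>auto simp: EL_def\<close>)
qed

definition sinL :: "real \<Rightarrow> real" where "sinL z = (if 0 \<le> z \<and> z \<le> pi then sin z else 0)"

lemma sinL_nn: "0 \<le> sinL z"
  unfolding sinL_def by (simp add: sin_ge_zero)

lemma sinL_pos: "0 < sinL z \<Longrightarrow> 0 \<le> z \<and> z \<le> pi"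
  unfolding sinL_def by (auto split: if_splits)

lemma sinL_eq: "0 \<le> z \<Longrightarrow> z \<le> pi \<Longrightarrow> sinL z = sin z"
  unfolding sinL_def by simp

lemma sin_id: "sin ((x1::real)-y1) * sin (x2-y2) - sin (x1-y2) * sin (x2-y1) = sin (x2-x1) * sin (y2-y1)"
  unfolding sin_diff cos_diff by algebra

lemma sin_rank2: "det3 (sin ((x1::real)-y1)) (sin (x1-y2)) (sin (x1-y3)) (sin (x2-y1)) (sin (x2-y2)) (sin (x2-y3))
      (sin (x3-y1)) (sin (x3-y2)) (sin (x3-y3)) = 0"
  unfolding det3_def sin_diff by algebra

lemma sinL_TN2:
  assumes "x1 < x2" "y1 < y2"
  shows "sinL (x1-y2) * sinL (x2-y1) \<le> sinL (x1-y1) * sinL (x2-y2)"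
proof (cases "0 \<le> x1-y2 \<and> x2-y1 \<le> pi")
  case True
  have e: "sinL (x1-y2) = sin (x1-y2)" "sinL (x2-y1) = sin (x2-y1)"
     "sinL (x1-y1) = sin (x1-y1)" "sinL (x2-y2) = sin (x2-y2)"
    using True assms by (auto intro!: sinL_eq)
  have "0 \<le> sin (x2-x1) * sin (y2-y1)"
    using True assms by (intro mult_nonneg_nonneg sin_ge_zero) auto
  then show ?thesis unfolding e using sin_id[of x1 y1 x2 y2] by linarith
next
  case False
  then have z: "sinL (x1-y2) * sinL (x2-y1) = 0" unfolding sinL_def by auto
  have "0 \<le> sinL (x1-y1) * sinL (x2-y2)" by (intro mult_nonneg_nonneg sinL_nn)
  then show ?thesis using z by linarith
qed

lemma sin_nonpos1: "-pi \<le> u \<Longrightarrow> u \<le> 0 \<Longrightarrow> sin u \<le> 0"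
  using sin_ge_zero[of "-u"] by simp

lemma sin_nonpos2: "pi \<le> u \<Longrightarrow> u \<le> 2*pi \<Longrightarrow> sin u \<le> 0"
  using sin_ge_zero[of "u - pi"] by (simp add: sin_diff)

lemma sinL_TN3: "TN 3 sinL"
proof (rule TN3I)
  show "0 \<le> sinL z" for z by (rule sinL_nn)
  show "sinL (x1-y2) * sinL (x2-y1) \<le> sinL (x1-y1) * sinL (x2-y2)" if "x1 < x2" "y1 < y2" for x1 x2 y1 y2
    using sinL_TN2 that .
  fix x1 x2 x3 y1 y2 y3 :: real
  assume xy: "x1 < x2" "x2 < x3" "y1 < y2" "y2 < y3"
  let ?a = "sinL (x1-y1)" and ?b = "sinL (x1-y2)" and ?c = "sinL (x1-y3)"
  let ?d = "sinL (x2-y1)" and ?e = "sinL (x2-y2)" and ?f = "sinL (x2-y3)"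
  let ?g = "sinL (x3-y1)" and ?h = "sinL (x3-y2)" and ?i = "sinL (x3-y3)"
  have M11: "?b*?d \<le> ?a*?e" using sinL_TN2 xy by simp
  have M33: "?f*?h \<le> ?e*?i" using sinL_TN2[of x2 x3 y2 y3] xy by simp
  have M13: "?c*?e \<le> ?b*?f" using sinL_TN2[of x1 x2 y2 y3] xy by simp
  have M31: "?e*?g \<le> ?d*?h" using sinL_TN2[of x2 x3 y1 y2] xy by (simp add: mult.commute)
  have nn: "0 \<le> sinL z" for z by (rule sinL_nn)
  have m3: "(?b*?f - ?c*?e)*(?d*?h - ?e*?g) \<le> (?a*?e - ?b*?d)*(?e*?i - ?f*?h)" if epos: "?e > 0"
  proof (cases "?b > 0 \<and> ?f > 0 \<and> ?d > 0 \<and> ?h > 0")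
    case False
    then have "?b = 0 \<or> ?f = 0 \<or> ?d = 0 \<or> ?h = 0" using nn[of "x1-y2"] nn[of "x2-y3"] nn[of "x2-y1"] nn[of "x3-y2"] by linarith
    then have "?b*?f - ?c*?e \<le> 0 \<or> ?d*?h - ?e*?g \<le> 0" using nn by auto
    then have "(?b*?f - ?c*?e)*(?d*?h - ?e*?g) \<le> 0"
      using M13 M31 by (auto simp: mult_le_0_iff)
    also have "0 \<le> (?a*?e - ?b*?d)*(?e*?i - ?f*?h)" using M11 M33 by simp
    finally show ?thesis .
  next
    case True
    then have r: "0 \<le> x1-y2" "x1-y2 \<le> pi" "0 \<le> x2-y3" "x2-y3 \<le> pi" "0 \<le> x2-y1" "x2-y1 \<le> pi"
        "0 \<le> x3-y2" "x3-y2 \<le> pi" by (auto dest: sinL_pos)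
    have r2: "0 \<le> x2-y2" "x2-y2 \<le> pi" using epos by (auto dest: sinL_pos)
    have ea: "?a = sin (x1-y1)" using r xy by (intro sinL_eq) auto
    have eb: "?b = sin (x1-y2)" using r by (intro sinL_eq) auto
    have ed: "?d = sin (x2-y1)" using r by (intro sinL_eq) auto
    have ee: "?e = sin (x2-y2)" using r2 by (intro sinL_eq) auto
    have ef: "?f = sin (x2-y3)" using r by (intro sinL_eq) auto
    have eh: "?h = sin (x3-y2)" using r by (intro sinL_eq) auto
    have ei: "?i = sin (x3-y3)" using r xy by (intro sinL_eq) auto
    have cge: "sin (x1-y3) \<le> ?c"
    proof (cases "0 \<le> x1-y3")
      case True then show ?thesis using r xy by (subst sinL_eq) auto
    next
      case False
      then have "sin (x1-y3) \<le> 0" using r r2 by (intro sin_nonpos1) auto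
      then show ?thesis using nn[of "x1-y3"] by linarith
    qed
    have gge: "sin (x3-y1) \<le> ?g"
    proof (cases "x3-y1 \<le> pi")
      case True then show ?thesis using r xy by (subst sinL_eq) auto
    next
      case False
      then have "sin (x3-y1) \<le> 0" using r r2 by (intro sin_nonpos2) auto
      then show ?thesis using nn[of "x3-y1"] by linarith
    qed
    have A: "0 \<le> ?b*?f - ?c*?e" using M13 by simp
    have B: "0 \<le> ?d*?h - ?e*?g" using M31 by simp
    have A': "?b*?f - ?c*?e \<le> ?b*?f - sin (x1-y3) * ?e" using cge epos by (simp add: mult_right_mono)
    have B': "?d*?h - ?e*?g \<le> ?d*?h - ?e * sin (x3-y1)" using gge epos by (simp add: mult_left_mono)
    have "(?b*?f - ?c*?e)*(?d*?h - ?e*?g) \<le> (?b*?f - sin (x1-y3) * ?e)*(?d*?h - ?e * sin (x3-y1))"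
      using A B A' B' by (intro mult_mono) auto
    also have "\<dots> = (?a*?e - ?b*?d)*(?e*?i - ?f*?h)"
    proof -
      have "?e * det3 (sin (x1-y1)) (sin (x1-y2)) (sin (x1-y3)) (sin (x2-y1)) (sin (x2-y2)) (sin (x2-y3))
        (sin (x3-y1)) (sin (x3-y2)) (sin (x3-y3)) = 0" using sin_rank2 by simp
      then show ?thesis unfolding ea eb ed ee ef eh ei desnanot by simp
    qed
    finally show ?thesis .
  qed
  show "0 \<le> K3 sinL x1 x2 x3 y1 y2 y3"
    unfolding K3_def by (rule crit) (use M11 M33 m3 nn in \<open>auto\<close>)
qed

lemma EL_not: assumes "\<alpha> < 0" shows "\<not> TN 3 (\<lambda>x. EL x powr \<alpha>)"
proof
  assume T: "TN 3 (\<lambda>x. EL x powr \<alpha>)"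
  have "EL (0-1) powr \<alpha> * EL (1-0) powr \<alpha> \<le> EL (0-0) powr \<alpha> * EL (1-1) powr \<alpha>"
    using TN3D2[OF T, of 0 1 0 1] by simp
  moreover have "EL (0-1) powr \<alpha> * EL (1-0) powr \<alpha> = exp (- \<alpha>)"
    by (simp add: EL_def powr_def)
  moreover have "EL (0-0) powr \<alpha> * EL (1-1) powr \<alpha> = 1"
    by (simp add: EL_def)
  moreover have "exp (- \<alpha>) > 1" using assms by simp
  ultimately show False by linarith
qed

lemma sinL_not: assumes "0 \<le> \<alpha>" "\<alpha> < 1" shows "\<not> TN 3 (\<lambda>x. sinL x powr \<alpha>)"
proof
  assume T: "TN 3 (\<lambda>x. sinL x powr \<alpha>)"
  define s where "s = sin (pi/4)"
  have s0: "s > 0" unfolding s_def by (rule sin_gt_zero) auto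
  have ss: "s * s = 1/2" unfolding s_def sin_45 by simp
  have v1: "sinL (pi/2) = 1" by (simp add: sinL_def)
  have v2: "sinL (pi/4) = s" unfolding s_def by (simp add: sinL_def)
  have v3: "sinL (3*pi/4) = s"
  proof -
    have "sin (3*pi/4) = sin (pi - pi/4)" by (simp add: field_simps)
    also have "\<dots> = s" unfolding s_def by (rule sin_pi_minus)
    finally show ?thesis by (simp add: sinL_def)
  qed
  have v4: "sinL 0 = 0" "sinL pi = 0" by (simp_all add: sinL_def)
  have D: "0 \<le> K3 (\<lambda>x. sinL x powr \<alpha>) (pi/2) (3*pi/4) pi 0 (pi/4) (pi/2)"
    by (rule TN3D3[OF T]) (simp_all add: field_simps)
  have e: "pi/2 - 0 = pi/2" "pi/2 - pi/4 = pi/4" "pi/2 - pi/2 = 0" "3*pi/4 - 0 = 3*pi/4"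
    "3*pi/4 - pi/4 = pi/2" "3*pi/4 - pi/2 = pi/4" "pi - 0 = pi" "pi - pi/4 = 3*pi/4" "pi - pi/2 = pi/2"
    by (simp_all add: field_simps)
  have k: "K3 (\<lambda>x. sinL x powr \<alpha>) (pi/2) (3*pi/4) pi 0 (pi/4) (pi/2) = 1 - 2 * (s powr \<alpha> * s powr \<alpha>)"
    unfolding K3_def e v1 v2 v3 v4 det3_def by simp
  have p: "s powr \<alpha> * s powr \<alpha> = (1/2) powr \<alpha>" by (simp add: powr_mult[symmetric] ss)
  have g: "(1/2::real) powr \<alpha> > (1/2) powr 1" using assms by (intro powr_less_mono') auto
  show False using D k p g by simp
qed

theorem mainTheorem18:
  shows "(\<forall>\<alpha>::real. \<alpha> < 0 \<longrightarrow>
            (\<exists>L :: real \<Rightarrow> real. (\<forall>x. L x > 0) \<and> TN 3 L \<and>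
               \<not> TN 3 (\<lambda>x. L x powr \<alpha>)))
       \<and> (\<forall>\<alpha>::real. \<alpha> \<ge> 0 \<longrightarrow>
            ((\<forall>L :: real \<Rightarrow> real. TN 3 L \<longrightarrow> TN 3 (\<lambda>x. L x powr \<alpha>)) \<longleftrightarrow> \<alpha> \<ge> 1))"
proof (intro conjI allI impI)
  fix \<alpha> :: real assume a: "\<alpha> < 0"
  show "\<exists>L :: real \<Rightarrow> real. (\<forall>x. L x > 0) \<and> TN 3 L \<and> \<not> TN 3 (\<lambda>x. L x powr \<alpha>)"
    by (rule exI[of _ EL]) (use EL_TN3 EL_not[OF a] in \<open>auto simp: EL_def\<close>)
next
  fix \<alpha> :: real assume a: "\<alpha> \<ge> 0"
  show "(\<forall>L :: real \<Rightarrow> real. TN 3 L \<longrightarrow> TN 3 (\<lambda>x. L x powr \<alpha>)) \<longleftrightarrow> \<alpha> \<ge> 1"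
  proof
    assume H: "\<forall>L :: real \<Rightarrow> real. TN 3 L \<longrightarrow> TN 3 (\<lambda>x. L x powr \<alpha>)"
    show "\<alpha> \<ge> 1"
    proof (rule ccontr)
      assume "\<not> \<alpha> \<ge> 1"
      then show False using H sinL_TN3 sinL_not[OF a] by auto
    qed
  next
    assume "\<alpha> \<ge> 1"
    then show "\<forall>L :: real \<Rightarrow> real. TN 3 L \<longrightarrow> TN 3 (\<lambda>x. L x powr \<alpha>)"
      using TN3_power by blast
  qed
qed

end
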